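(* Let $k>1$ and let $g_k:[0,+\infty)\to\mathbb{R}$ be $g_k(s)=\frac{s^2}{k+s^2}$. Then for every $\alpha>0$ there is a constant $c_\alpha>0$, independent of $\sigma$, such that for all $A,B\ge 0$, all $s\ge 0$ and all $\sigma>0$, $$A\cdot B\left[s\, g_k'\left((s-k)_+\right)\right]\le 2\sqrt2\,k\left[\alpha A^2 g_k\left((s-k)_+\right)+\alpha\sigma A^2+c_\alpha B^2\right].$$ Moreover, there exists a constant $c_k>0$, depending on $k$, such that $$s\,g_k'\left((s^2-k)_+\right)\le c_k\qquad\text{for all }s\ge 0.$$
   Context: $(\cdot)_+$ denotes the positive part; $g_k'$ is the derivative of $g_k$. *)

theory Defs
  imports "HOL-Analysis.Analysis"
begin

definition gk :: "real \<Rightarrow> real \<Rightarrow> real" where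
  "gk k s = s\<^sup>2 / (k + s\<^sup>2)"

definition pos_part :: "real \<Rightarrow> real" where
  "pos_part x = max x 0"

end

theory Submission
  imports Defs
begin

lemma gk_deriv:
  assumes "k > 0"
  shows "deriv (gk k) t = 2*k*t/(k+t\<^sup>2)\<^sup>2"
proof -
  have nz: "k + t\<^sup>2 \<noteq> 0" using assms by (smt (verit) zero_le_power2)
  have "((\<lambda>x. x\<^sup>2 / (k + x\<^sup>2)) has_real_derivative
        ((2*t) * (k+t\<^sup>2) - t\<^sup>2 * (2*t)) / ((k+t\<^sup>2)*(k+t\<^sup>2))) (at t)"
    by (rule derivative_eq_intros refl | simp add: nz)+
  moreover have "((2*t) * (k+t\<^sup>2) - t\<^sup>2 * (2*t)) / ((k+t\<^sup>2)*(k+t\<^sup>2)) = 2*k*t/(k+t\<^sup>2)\<^sup>2"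
    by (simp add: power2_eq_square algebra_simps)
  ultimately have "(gk k has_real_derivative 2*k*t/(k+t\<^sup>2)\<^sup>2) (at t)"
    unfolding gk_def[abs_def] by simp
  thus ?thesis by (rule DERIV_imp_deriv)
qed

lemma a1: "(t+k)\<^sup>2 \<le> 2*k*(k+t\<^sup>2)" if "k>1" for t k :: real
proof -
  have "0 \<le> (t-k)\<^sup>2" by simp
  hence "(t+k)\<^sup>2 \<le> 2*t\<^sup>2 + 2*k\<^sup>2" by (simp add: power2_eq_square algebra_simps)
  moreover have "t\<^sup>2 \<le> k*t\<^sup>2" using mult_right_mono[of 1 k "t\<^sup>2"] that by simp
  ultimately show ?thesis by (simp add: algebra_simps power2_eq_square)
qed
lemma a2: "4*k\<^sup>2*(2*k*q) * t\<^sup>2 / q^4 = 8*k^3 * (t\<^sup>2/q) / q\<^sup>2" if "q>0" for q k t :: real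
  using that by (simp add: field_simps eval_nat_numeral)
lemma a3: "8*k^3 * g / q\<^sup>2 \<le> 8*k*g" if "k>1" "q \<ge> k" "g \<ge> 0" for q k g :: real
proof -
  have "k\<^sup>2 \<le> q\<^sup>2" using that by (intro power_mono) auto
  hence "8*k*g*k\<^sup>2 \<le> 8*k*g*q\<^sup>2" using that by (intro mult_left_mono) auto
  hence "8*k^3*g \<le> 8*k*g*q\<^sup>2" by (simp add: eval_nat_numeral algebra_simps)
  thus ?thesis using that by (simp add: divide_le_eq)
qed
lemma a4: "A*B*M \<le> D*\<alpha>*g*A\<^sup>2 + B\<^sup>2*(8*k*g)/(4*D*\<alpha>*g)" if "M\<^sup>2 \<le> 8*k*g" "D>0" "\<alpha>>0" "g>0" for A B M D \<alpha> g k :: real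
proof -
  have "0 \<le> (2*D*\<alpha>*g*A - B*M)\<^sup>2" by simp
  hence "4*D*\<alpha>*g*(A*B*M) \<le> 4*D*\<alpha>*g*(D*\<alpha>*g*A\<^sup>2) + B\<^sup>2*M\<^sup>2"
    by (simp add: power2_eq_square algebra_simps)
  also have "B\<^sup>2*M\<^sup>2 \<le> B\<^sup>2*(8*k*g)" using that by (simp add: mult_left_mono)
  finally have h: "4*D*\<alpha>*g*(A*B*M) \<le> 4*D*\<alpha>*g*(D*\<alpha>*g*A\<^sup>2) + B\<^sup>2*(8*k*g)" by simp
  have p: "4*D*\<alpha>*g > 0" using that by simp
  have "A*B*M \<le> (4*D*\<alpha>*g*(D*\<alpha>*g*A\<^sup>2) + B\<^sup>2*(8*k*g)) / (4*D*\<alpha>*g)"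
    using h p by (simp add: le_divide_eq mult.commute)
  also have "\<dots> = D*\<alpha>*g*A\<^sup>2 + B\<^sup>2*(8*k*g)/(4*D*\<alpha>*g)" using p by (simp add: add_divide_distrib)
  finally show ?thesis .
qed
lemma a5: "B\<^sup>2*(8*k*g)/(4*D*\<alpha>*g) = D * ((1/(4*k*\<alpha>)) * B\<^sup>2)" if "D\<^sup>2 = 8*k\<^sup>2" "D>0" "\<alpha>>0" "g>0" "k>0" for B D \<alpha> g k :: real
proof -
  have "B\<^sup>2*(8*k*g)/(4*D*\<alpha>*g) = B\<^sup>2*(2*k)/(D*\<alpha>)" using that by (simp add: field_simps)
  also have "\<dots> = D\<^sup>2 * B\<^sup>2 / (4*k*D*\<alpha>)" using that by (simp add: field_simps power2_eq_square)
  also have "\<dots> = D * ((1/(4*k*\<alpha>)) * B\<^sup>2)" using that by (simp add: field_simps power2_eq_square)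
  finally show ?thesis .
qed
lemma part1:
  fixes k A B s \<sigma> \<alpha> :: real
  assumes k: "k > 1" and a: "\<alpha> > 0" and A: "A \<ge> 0" and B: "B \<ge> 0" and s: "s \<ge> 0" and sg: "\<sigma> > 0"
  shows "A * B * (s * deriv (gk k) (pos_part (s - k)))
              \<le> 2 * sqrt 2 * k * (\<alpha> * A\<^sup>2 * gk k (pos_part (s - k)) + \<alpha> * \<sigma> * A\<^sup>2 + (1/(4*k*\<alpha>)) * B\<^sup>2)"
proof (cases "s \<le> k")
  case True
  hence "pos_part (s - k) = 0" by (simp add: pos_part_def)
  hence l: "A * B * (s * deriv (gk k) (pos_part (s - k))) = 0" using gk_deriv[of k 0] k by simp
  have "0 \<le> gk k (pos_part (s - k))" unfolding gk_def using k by simp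
  hence "0 \<le> \<alpha> * A\<^sup>2 * gk k (pos_part (s - k)) + \<alpha> * \<sigma> * A\<^sup>2 + (1/(4*k*\<alpha>)) * B\<^sup>2"
    using a sg k by (intro add_nonneg_nonneg mult_nonneg_nonneg) auto
  then show ?thesis unfolding l using k by simp
next
  case False
  define t where "t = s - k"
  have t: "t > 0" using False t_def by simp
  have pp: "pos_part (s - k) = t" using t t_def by (simp add: pos_part_def)
  define D where "D = 2 * sqrt 2 * k"
  define q where "q = k+t\<^sup>2"
  define g where "g = t\<^sup>2/q"
  define M where "M = s * (2*k*t/q\<^sup>2)"
  have D: "D > 0" using k D_def by simp
  have D2: "D\<^sup>2 = 8*k\<^sup>2" unfolding D_def by (simp add: power_mult_distrib)
  have kq: "q \<ge> k" unfolding q_def by simp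
  have kt: "q \<ge> k" "q > 0" using kq k by auto
  have g: "g > 0" using t kt g_def by simp
  have sk: "s = t + k" using t_def by simp
  have key: "M\<^sup>2 \<le> 8*k*g"
  proof -
    have "M\<^sup>2 = 4*k\<^sup>2*(t+k)\<^sup>2 * t\<^sup>2 / q^4" unfolding M_def sk
      by (simp add: power_mult_distrib power_divide algebra_simps power2_eq_square eval_nat_numeral)
    also have "\<dots> \<le> 4*k\<^sup>2*(2*k*q) * t\<^sup>2 / q^4"
      using a1[of k t] k kt unfolding q_def by (intro divide_right_mono mult_right_mono mult_left_mono) auto
    also have "\<dots> = 8*k^3 * g / q\<^sup>2" unfolding g_def using kt a2 by blast
    also have "\<dots> \<le> 8*k*g" using a3[of k q g] k kt g by simp
    finally show ?thesis .
  qed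
  have lhs: "A * B * (s * deriv (gk k) (pos_part (s - k))) = A*B*M"
    unfolding pp M_def q_def using gk_deriv[of k t] k by simp
  have gg: "gk k (pos_part (s - k)) = g" unfolding pp gk_def g_def q_def ..
  have "A*B*M \<le> D*\<alpha>*g*A\<^sup>2 + B\<^sup>2*(8*k*g)/(4*D*\<alpha>*g)" using a4[OF key D a g] .
  also have "B\<^sup>2*(8*k*g)/(4*D*\<alpha>*g) = D * ((1/(4*k*\<alpha>)) * B\<^sup>2)"
    using a5[OF D2 D a g] k by simp
  also have "D*\<alpha>*g*A\<^sup>2 + D * ((1/(4*k*\<alpha>)) * B\<^sup>2) \<le> D*(\<alpha>*A\<^sup>2*g + \<alpha>*\<sigma>*A\<^sup>2 + (1/(4*k*\<alpha>)) * B\<^sup>2)"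
    using D a sg by (simp add: algebra_simps)
  finally show ?thesis unfolding lhs gg D_def .
qed

lemma part2:
  fixes k s :: real
  assumes k: "k > 1" and s: "s \<ge> 0"
  shows "s * deriv (gk k) (pos_part (s\<^sup>2 - k)) \<le> 6*k"
proof (cases "s\<^sup>2 \<le> k")
  case True
  hence "pos_part (s\<^sup>2 - k) = 0" by (simp add: pos_part_def)
  thus ?thesis using gk_deriv[of k 0] k by simp
next
  case False
  define t where "t = s\<^sup>2 - k"
  have t: "t > 0" using False t_def by simp
  have pp: "pos_part (s\<^sup>2 - k) = t" using t t_def by (simp add: pos_part_def)
  have kt: "k + t\<^sup>2 > 0" using k t by (simp add: add_pos_nonneg)
  have t1: "t \<le> 1 + t\<^sup>2"
  proof -
    have "0 \<le> (t - 1)\<^sup>2" by simp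
    thus ?thesis using t by (simp add: power2_eq_square algebra_simps)
  qed
  have tt: "t \<le> k + t\<^sup>2" using t1 k by simp
  have s1: "s \<le> 1 + s\<^sup>2"
  proof (cases "s \<le> 1")
    case True thus ?thesis by (smt (verit) zero_le_power2)
  next
    case False
    hence "s * 1 \<le> s * s" using s by (intro mult_left_mono) auto
    thus ?thesis by (simp add: power2_eq_square)
  qed
  have st: "s\<^sup>2 = t + k" unfolding t_def by simp
  have t2: "t\<^sup>2 \<ge> 0" by simp
  have e3: "3*(k+t\<^sup>2) = 3*k + 3*t\<^sup>2" by simp
  have ss: "s \<le> 3*(k+t\<^sup>2)" unfolding e3 using s1 st tt t2 k by linarith
  have "s * deriv (gk k) (pos_part (s\<^sup>2 - k)) = s * (2*k*t) / (k+t\<^sup>2)\<^sup>2"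
    using gk_deriv[of k t] k pp by simp
  also have "\<dots> \<le> (3*(k+t\<^sup>2)) * (2*k*(k+t\<^sup>2)) / (k+t\<^sup>2)\<^sup>2"
    using ss tt k t s by (intro divide_right_mono mult_mono) auto
  also have "\<dots> = 6*k*(k+t\<^sup>2)\<^sup>2/(k+t\<^sup>2)\<^sup>2" by (simp add: power2_eq_square algebra_simps)
  also have "\<dots> = 6*k" using kt by simp
  finally show ?thesis .
qed

theorem mainTheorem3:
  fixes k :: real
  assumes "k > 1"
  shows "(\<forall>\<alpha>>0. \<exists>c>0. \<forall>A B s \<sigma> :: real. A \<ge> 0 \<longrightarrow> B \<ge> 0 \<longrightarrow> s \<ge> 0 \<longrightarrow> \<sigma> > 0 \<longrightarrow>
            A * B * (s * deriv (gk k) (pos_part (s - k)))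
              \<le> 2 * sqrt 2 * k * (\<alpha> * A\<^sup>2 * gk k (pos_part (s - k)) + \<alpha> * \<sigma> * A\<^sup>2 + c * B\<^sup>2))
       \<and> (\<exists>c>0. \<forall>s::real. s \<ge> 0 \<longrightarrow> s * deriv (gk k) (pos_part (s\<^sup>2 - k)) \<le> c)"
proof (intro conjI allI impI)
  fix \<alpha> :: real assume a: "\<alpha> > 0"
  show "\<exists>c>0. \<forall>A B s \<sigma> :: real. A \<ge> 0 \<longrightarrow> B \<ge> 0 \<longrightarrow> s \<ge> 0 \<longrightarrow> \<sigma> > 0 \<longrightarrow>
            A * B * (s * deriv (gk k) (pos_part (s - k)))
              \<le> 2 * sqrt 2 * k * (\<alpha> * A\<^sup>2 * gk k (pos_part (s - k)) + \<alpha> * \<sigma> * A\<^sup>2 + c * B\<^sup>2)"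
    using part1[OF assms a] assms a by (intro exI[of _ "1/(4*k*\<alpha>)"]) auto
next
  show "\<exists>c>0. \<forall>s::real. s \<ge> 0 \<longrightarrow> s * deriv (gk k) (pos_part (s\<^sup>2 - k)) \<le> c"
    using part2[OF assms] assms by (intro exI[of _ "6*k"]) auto
qed

end
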